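(* Let $d\ge2$ and let $\{U^{(a)}_j\}_{j=0}^{d^2-1}$, $a=0,\dots,d^2-2$, be a complete set of mutually unbiased unitary-operator bases for $\operatorname{End}(\mathbb{C}^d)$ (i.e. $d^2-1$ unitary operator bases, pairwise mutually unbiased). Then the collection of all $d^2(d^2-1)$ operators, taken as elements of $\operatorname{PU}(d)$ and each given weight $1/(d^2(d^2-1))$, forms a weighted unitary $2$-design; that is, $$\frac{1}{d^2(d^2-1)}\sum_{a=0}^{d^2-2}\sum_{j=0}^{d^2-1}U^{(a)}_j\otimes U^{(a)}_j\otimes U^{(a)\dagger}_j\otimes U^{(a)\dagger}_j=\int_{\operatorname{PU}(d)}d\mu(x)\,U(x)^{\otimes2}\otimes(U(x)^{\otimes2})^\dagger.$$
   Context: A unitary operator basis for $\operatorname{End}(\mathbb{C}^d)$ is a set $\{U_j\}_{j=0}^{d^2-1}\subset\operatorname{U}(d)$ with $\operatorname{tr}(U_j^\dagger U_k)=d\,\delta_{jk}$. Two unitary operator bases $\{U_j\}$, $\{V_k\}$ are mutually unbiased if $|\operatorname{tr}(U_j^\dagger V_k)|^2=1$ for all $j,k$. $\mu$ is the Haar probability measure on $\operatorname{PU}(d)=\operatorname{U}(d)/\operatorname{U}(1)$ and $U(x)$ a representative of $x$. *)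

theory Defs
  imports "HOL-Analysis.Analysis" "HOL-Probability.Probability"
begin

text \<open>d x d complex matrices are modelled as complex^'n^'n with d = CARD('n).\<close>

definition cadj :: "complex^'n^'n \<Rightarrow> complex^'n^'n" where
  "cadj A = (\<chi> i j. cnj (A $ j $ i))"

definition unitary_mat :: "complex^'n^'n \<Rightarrow> bool" where
  "unitary_mat A \<longleftrightarrow> cadj A ** A = mat 1 \<and> A ** cadj A = mat 1"

definition unitary_operator_basis :: "(nat \<Rightarrow> complex^'n^'n) \<Rightarrow> bool" where
  "unitary_operator_basis U \<longleftrightarrow>
     (\<forall>j < CARD('n)^2. unitary_mat (U j)) \<and>
     (\<forall>j < CARD('n)^2. \<forall>k < CARD('n)^2.
        trace (cadj (U j) ** U k) = (if j = k then of_nat CARD('n) else 0))"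

definition mutually_unbiased :: "(nat \<Rightarrow> complex^'n^'n) \<Rightarrow> (nat \<Rightarrow> complex^'n^'n) \<Rightarrow> bool" where
  "mutually_unbiased U V \<longleftrightarrow>
     (\<forall>j < CARD('n)^2. \<forall>k < CARD('n)^2. (cmod (trace (cadj (U j) ** V k)))^2 = 1)"

text \<open>Entries of the 4-fold Kronecker product A \<otimes> B \<otimes> C \<otimes> D: row multi-index (i1,i2,i3,i4),
  column multi-index (j1,j2,j3,j4).\<close>
definition tensor4_entry ::
  "complex^'n^'n \<Rightarrow> complex^'n^'n \<Rightarrow> complex^'n^'n \<Rightarrow> complex^'n^'n
   \<Rightarrow> 'n \<times> 'n \<times> 'n \<times> 'n \<Rightarrow> 'n \<times> 'n \<times> 'n \<times> 'n \<Rightarrow> complex" where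
  "tensor4_entry A B C D = (\<lambda>(i1,i2,i3,i4) (j1,j2,j3,j4).
      A $ i1 $ j1 * B $ i2 $ j2 * C $ i3 $ j3 * D $ i4 $ j4)"

definition haar_unitary :: "(complex^'n^'n) measure \<Rightarrow> bool" where
  "haar_unitary M \<longleftrightarrow>
     prob_space M \<and> sets M = sets borel \<and>
     emeasure M {A. unitary_mat A} = 1 \<and>
     (\<forall>V. unitary_mat V \<longrightarrow> distr M borel (\<lambda>A. V ** A) = M)"

end

theory Submission
  imports Defs
begin


type_synonym 'n idx4 = "'n \<times> 'n \<times> 'n \<times> 'n"

definition rho :: "complex^'n^'n \<Rightarrow> complex^('n idx4)^('n idx4)" where
  "rho X = (\<chi> i j. case i of (i1,i2,i3,i4) \<Rightarrow> case j of (j1,j2,j3,j4) \<Rightarrow>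
       X$i1$j1 * X$i2$j2 * cnj (X$i3$j3) * cnj (X$i4$j4))"

lemma rho_nth[simp]: "rho X $ (i1,i2,i3,i4) $ (j1,j2,j3,j4) =
   X$i1$j1 * X$i2$j2 * cnj (X$i3$j3) * cnj (X$i4$j4)"
  by (simp add: rho_def)

lemma sum_prodU: "(\<Sum>k\<in>(UNIV::('a::finite\<times>'b::finite) set). f k) = (\<Sum>a\<in>UNIV. \<Sum>b\<in>UNIV. f (a,b))"
  by (simp add: sum.cartesian_product UNIV_Times_UNIV[symmetric] del: UNIV_Times_UNIV)

lemma sum4: "(\<Sum>k\<in>(UNIV::('n::finite) idx4 set). f k) =
   (\<Sum>a\<in>UNIV. \<Sum>b\<in>UNIV. \<Sum>c\<in>UNIV. \<Sum>d\<in>UNIV. f (a,b,c,d))"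
  by (simp add: sum_prodU)

lemma sum4_prod0: "sum f A * (sum g B * (sum h C * sum k D)) =
  (\<Sum>a\<in>A. \<Sum>b\<in>B. \<Sum>c\<in>C. \<Sum>d\<in>D. (f a * (g b * (h c * k d)) :: complex))"
  by (simp only: sum_distrib_right) (simp only: sum_distrib_left)

lemma sum4_prod: "(\<Sum>a\<in>UNIV. \<Sum>b\<in>UNIV. \<Sum>c\<in>UNIV. \<Sum>d\<in>UNIV. (f a * g b * h c * k d :: complex)) =
   sum f UNIV * sum g UNIV * sum h UNIV * sum k UNIV"
  using sum4_prod0[of f UNIV g UNIV h UNIV k UNIV] by (simp add: mult.assoc)

lemma cadj_nth[simp]: "cadj A $ i $ j = cnj (A $ j $ i)"
  by (simp add: cadj_def)

lemma cadj_cadj[simp]: "cadj (cadj A) = A"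
  by (simp add: vec_eq_iff)

lemma cadj_mult: "cadj (A ** B) = cadj B ** cadj A"
  by (simp add: vec_eq_iff matrix_matrix_mult_def cnj_sum mult.commute)

lemma cadj_diff: "cadj (A - B) = cadj A - cadj B"
  by (simp add: vec_eq_iff)

lemma rho_mult: "rho (A ** B) = rho A ** rho B"
proof -
  have "rho (A ** B) $ i $ j = (rho A ** rho B) $ i $ j" for i j
  proof -
    obtain i1 i2 i3 i4 where i: "i = (i1,i2,i3,i4)" by (cases i) auto
    obtain j1 j2 j3 j4 where j: "j = (j1,j2,j3,j4)" by (cases j) auto
    show ?thesis unfolding i j
      apply (simp add: matrix_matrix_mult_def sum4 cnj_sum)
      apply (subst sum4_prod[symmetric])
      apply (simp add: algebra_simps)
      done
  qed
  then show ?thesis by (simp add: vec_eq_iff)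
qed

lemma rho_cadj: "rho (cadj A) = cadj (rho A)"
proof -
  have "rho (cadj A) $ i $ j = cadj (rho A) $ i $ j" for i j
    by (cases i; cases j) auto
  then show ?thesis by (simp add: vec_eq_iff)
qed

lemma rho_one: "rho (mat 1 :: complex^'n::finite^'n) = mat 1"
proof -
  have "rho (mat 1 :: complex^'n^'n) $ i $ j = mat 1 $ i $ j" for i j :: "'n::finite idx4"
    by (cases i; cases j) (auto simp: mat_def)
  then show ?thesis by (simp add: vec_eq_iff)
qed

lemma trace_rho: "trace (rho A) = trace A ^ 2 * cnj (trace A) ^ 2"
  unfolding trace_def
  by (simp add: sum4 sum4_prod0[symmetric] cnj_sum power2_eq_square mult.assoc)

definition vnorm2 :: "complex^'k \<Rightarrow> real" where
  "vnorm2 s = (\<Sum>k\<in>UNIV. (cmod (s$k))^2)"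

definition vinner :: "complex^'k \<Rightarrow> complex^'k \<Rightarrow> complex" where
  "vinner s t = (\<Sum>k\<in>UNIV. cnj (s$k) * t$k)"

definition outer :: "complex^'k \<Rightarrow> complex^'k^'k" where
  "outer s = (\<chi> i j. s$i * cnj (s$j) / complex_of_real (vnorm2 s))"

definition herm_idem :: "complex^'k^'k \<Rightarrow> bool" where
  "herm_idem P \<longleftrightarrow> cadj P = P \<and> P ** P = P"

lemma cmod_sq_cnj: "complex_of_real ((cmod z)^2) = cnj z * z"
  using complex_norm_square[of z] by (simp add: mult.commute)

lemma cmod_sq_cnj': "(complex_of_real (cmod z))^2 = cnj z * z"
  using cmod_sq_cnj[of z] by simp

lemma mat_sub_ldistrib: "(A::'a::ring_1^'n::finite^'m) ** (B - C) = A ** B - A ** (C::'a^'p^'n::finite)"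
  by (simp add: vec_eq_iff matrix_matrix_mult_def sum_subtractf algebra_simps)

lemma mat_sub_rdistrib: "((A::'a::ring_1^'n::finite^'m) - B) ** C = A ** C - B ** (C::'a^'p^'n::finite)"
  by (simp add: vec_eq_iff matrix_matrix_mult_def sum_subtractf algebra_simps)

lemma vnorm2_pos: "s \<noteq> (0::complex^'k::finite) \<Longrightarrow> vnorm2 s > 0"
proof -
  assume "s \<noteq> 0"
  then obtain k where "s$k \<noteq> 0" by (auto simp: vec_eq_iff)
  then have "(cmod (s$k))^2 > 0" by simp
  moreover have "(cmod (s$k))^2 \<le> vnorm2 s" unfolding vnorm2_def
    by (rule member_le_sum) auto
  ultimately show ?thesis by linarith
qed

lemma vnorm2_eq: "complex_of_real (vnorm2 s) = vinner s s"
  by (simp add: vnorm2_def vinner_def cmod_sq_cnj')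

lemma trace_cadj_mult: "trace (cadj A ** B) = (\<Sum>i\<in>UNIV. \<Sum>j\<in>UNIV. cnj (A$i$j) * B$i$j)"
  unfolding trace_def matrix_matrix_mult_def by (simp, rule sum.swap)

lemma trace_herm_idem:
  assumes "herm_idem P"
  shows "trace P = complex_of_real (\<Sum>i\<in>UNIV. \<Sum>j\<in>UNIV. (cmod (P$i$j))^2)"
proof -
  have "trace P = trace (cadj P ** P)" using assms by (simp add: herm_idem_def)
  also have "\<dots> = (\<Sum>i\<in>UNIV. \<Sum>j\<in>UNIV. cnj (P$i$j) * P$i$j)" by (rule trace_cadj_mult)
  finally show ?thesis by (simp add: cmod_sq_cnj')
qed

lemma trace_diff: "trace (A - B) = trace A - trace (B::'a::ring_1^'n^'n)"
  by (simp add: trace_def sum_subtractf)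

lemma proj_sub:
  fixes P :: "complex^'k::finite^'k"
  assumes hP: "herm_idem P" and Ps: "P *v s = s" and s0: "s \<noteq> 0"
  shows "herm_idem (P - outer s)" "trace (P - outer s) = trace P - 1"
    "\<And>t. P *v t = t \<Longrightarrow> vinner s t = 0 \<Longrightarrow> (P - outer s) *v t = t"
proof -
  define a where "a = vnorm2 s"
  have a0: "complex_of_real a \<noteq> 0" using vnorm2_pos[OF s0] by (simp add: a_def)
  have aeq: "complex_of_real a = (\<Sum>k\<in>UNIV. cnj (s$k) * s$k)"
    using vnorm2_eq[of s] by (simp add: a_def vinner_def)
  have cO: "cadj (outer s) = outer s"
    by (simp add: vec_eq_iff outer_def mult.commute)
  have PO: "P ** outer s = outer s"
  proof -
    have "(P ** outer s)$i$j = outer s $i$j" for i j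
    proof -
      have "(P ** outer s)$i$j = (\<Sum>k\<in>UNIV. P$i$k * s$k) * cnj (s$j) / complex_of_real a"
        by (simp add: matrix_matrix_mult_def outer_def a_def sum_distrib_right sum_divide_distrib mult.assoc)
      also have "(\<Sum>k\<in>UNIV. P$i$k * s$k) = s$i" using Ps
        by (simp add: vec_eq_iff matrix_vector_mult_def)
      finally show ?thesis by (simp add: outer_def a_def)
    qed
    then show ?thesis by (simp add: vec_eq_iff)
  qed
  have cP: "cadj P = P" and PP: "P ** P = P" using hP by (auto simp: herm_idem_def)
  have OP: "outer s ** P = outer s"
    by (metis cO cP PO cadj_mult cadj_cadj)
  have OO: "outer s ** outer s = outer s"
  proof -
    have "(outer s ** outer s)$i$j = outer s $i$j" for i j
    proof -
      have "(outer s ** outer s)$i$j = s$i * (\<Sum>k\<in>UNIV. cnj (s$k) * s$k) * cnj (s$j) / (complex_of_real a * complex_of_real a)"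
        by (simp add: matrix_matrix_mult_def outer_def a_def sum_distrib_right sum_distrib_left sum_divide_distrib algebra_simps)
      also have "\<dots> = outer s $i$j" using a0 by (simp add: aeq[symmetric] outer_def a_def)
      finally show ?thesis .
    qed
    then show ?thesis by (simp add: vec_eq_iff)
  qed
  show "herm_idem (P - outer s)"
    unfolding herm_idem_def
    by (simp add: cadj_diff cO cP mat_sub_ldistrib mat_sub_rdistrib PP PO OP OO)
  have aeq2: "(\<Sum>i\<in>UNIV. s$i * cnj (s$i)) = complex_of_real a"
    using aeq by (simp add: mult.commute)
  have "trace (outer s) = 1"
    using a0 aeq2 by (simp add: trace_def outer_def a_def sum_divide_distrib[symmetric] aeq[unfolded a_def, symmetric] mult.commute)
  then show "trace (P - outer s) = trace P - 1" by (simp add: trace_diff)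
  fix t assume Pt: "P *v t = t" and st: "vinner s t = 0"
  have "outer s *v t = 0"
  proof -
    have "(outer s *v t)$i = s$i * vinner s t / complex_of_real (vnorm2 s)" for i
      by (simp add: matrix_vector_mult_def outer_def vinner_def sum_distrib_left sum_divide_distrib algebra_simps)
    then show ?thesis using st by (simp add: vec_eq_iff)
  qed
  then show "(P - outer s) *v t = t" using Pt by (simp add: matrix_vector_mult_def vec_eq_iff sum_subtractf algebra_simps)
qed



definition avec :: "complex^(('n::finite) idx4)" where
  "avec = (\<chi> k. case k of (k1,k2,k3,k4) \<Rightarrow> if k1 = k3 \<and> k2 = k4 then 1 else 0)"
definition bvec :: "complex^(('n::finite) idx4)" where
  "bvec = (\<chi> k. case k of (k1,k2,k3,k4) \<Rightarrow> if k1 = k4 \<and> k2 = k3 then 1 else 0)"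

lemma avec_nth[simp]: "avec $ (k1,k2,k3,k4) = (if k1 = k3 \<and> k2 = k4 then 1 else 0)"
  by (simp add: avec_def)
lemma bvec_nth[simp]: "bvec $ (k1,k2,k3,k4) = (if k1 = k4 \<and> k2 = k3 then 1 else 0)"
  by (simp add: bvec_def)

lemma delta2: "(\<Sum>k3\<in>(UNIV::'a::finite set). \<Sum>k4\<in>(UNIV::'a::finite set). (if k1 = k3 \<and> k2 = k4 then c k3 k4 else 0)) = (c k1 k2 :: complex)"
proof -
  have "(\<Sum>k3\<in>(UNIV::'a::finite set). \<Sum>k4\<in>(UNIV::'a::finite set). (if k1 = k3 \<and> k2 = k4 then c k3 k4 else 0))
     = (\<Sum>k3\<in>UNIV. if k1 = k3 then c k3 k2 else 0)"
    by (intro sum.cong refl) (auto simp: sum.delta sum.delta')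
  also have "\<dots> = c k1 k2" by (simp add: sum.delta sum.delta')
  finally show ?thesis .
qed

lemma delta4a: "(\<Sum>k1\<in>(UNIV::'a::finite set). \<Sum>k2\<in>(UNIV::'a set). \<Sum>k3\<in>(UNIV::'a set). \<Sum>k4\<in>(UNIV::'a set).
   F k1 k2 k3 k4 * (if k1 = k3 \<and> k2 = k4 then 1 else 0)) = (\<Sum>k1\<in>UNIV. \<Sum>k2\<in>UNIV. (F k1 k2 k1 k2 :: complex))"
proof -
  have "(\<Sum>k3\<in>(UNIV::'a::finite set). \<Sum>k4\<in>(UNIV::'a::finite set).
   F k1 k2 k3 k4 * (if k1 = k3 \<and> k2 = k4 then 1 else 0)) = F k1 k2 k1 k2" for k1 k2
    using delta2[of k1 k2 "F k1 k2"] by (simp add: if_distrib cong: if_cong)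
  then show ?thesis by simp
qed

lemma delta4b: "(\<Sum>k1\<in>(UNIV::'a::finite set). \<Sum>k2\<in>(UNIV::'a set). \<Sum>k3\<in>(UNIV::'a set). \<Sum>k4\<in>(UNIV::'a set).
   F k1 k2 k3 k4 * (if k1 = k4 \<and> k2 = k3 then 1 else 0)) = (\<Sum>k1\<in>UNIV. \<Sum>k2\<in>UNIV. (F k1 k2 k2 k1 :: complex))"
proof -
  have "(\<Sum>k3\<in>(UNIV::'a::finite set). \<Sum>k4\<in>(UNIV::'a::finite set).
   F k1 k2 k3 k4 * (if k1 = k4 \<and> k2 = k3 then 1 else 0)) = F k1 k2 k2 k1" for k1 k2
    using delta2[of k2 k1 "F k1 k2"] by (simp add: if_distrib conj_commute cong: if_cong)
  then show ?thesis by simp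
qed

lemma unitary_rows: "unitary_mat X \<Longrightarrow> (\<Sum>k\<in>UNIV. X$i$k * cnj (X$j$k)) = (if i = j then 1 else 0)"
proof -
  assume "unitary_mat X"
  then have "(X ** cadj X) $ i $ j = mat 1 $ i $ j" by (simp add: unitary_mat_def)
  then show ?thesis by (simp add: matrix_matrix_mult_def mat_def)
qed

lemma rho_fix_a:
  assumes "unitary_mat X" shows "rho X *v avec = avec"
proof -
  have "(rho X *v avec) $ i = avec $ i" for i
  proof -
    obtain i1 i2 i3 i4 where i: "i = (i1,i2,i3,i4)" by (cases i) auto
    have "(rho X *v avec) $ i = (\<Sum>k1\<in>UNIV. \<Sum>k2\<in>UNIV. X$i1$k1 * X$i2$k2 * cnj (X$i3$k1) * cnj (X$i4$k2))"
      unfolding i matrix_vector_mult_def by (simp add: sum4 delta4a)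
    also have "\<dots> = (\<Sum>k1\<in>UNIV. X$i1$k1 * cnj (X$i3$k1)) * (\<Sum>k2\<in>UNIV. X$i2$k2 * cnj (X$i4$k2))"
      by (simp add: sum_product algebra_simps)
    also have "\<dots> = avec $ i" using unitary_rows[OF assms] by (simp add: i)
    finally show ?thesis .
  qed
  then show ?thesis by (simp add: vec_eq_iff)
qed

lemma rho_fix_b:
  assumes "unitary_mat X" shows "rho X *v bvec = bvec"
proof -
  have "(rho X *v bvec) $ i = bvec $ i" for i
  proof -
    obtain i1 i2 i3 i4 where i: "i = (i1,i2,i3,i4)" by (cases i) auto
    have "(rho X *v bvec) $ i = (\<Sum>k1\<in>UNIV. \<Sum>k2\<in>UNIV. X$i1$k1 * X$i2$k2 * cnj (X$i3$k2) * cnj (X$i4$k1))"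
      unfolding i matrix_vector_mult_def by (simp add: sum4 delta4b)
    also have "\<dots> = (\<Sum>k1\<in>UNIV. X$i1$k1 * cnj (X$i4$k1)) * (\<Sum>k2\<in>UNIV. X$i2$k2 * cnj (X$i3$k2))"
      by (simp add: sum_product algebra_simps)
    also have "\<dots> = bvec $ i" using unitary_rows[OF assms] by (auto simp: i)
    finally show ?thesis .
  qed
  then show ?thesis by (simp add: vec_eq_iff)
qed

lemma sum_avec: "(\<Sum>k\<in>UNIV. (avec :: complex^('n::finite idx4)) $ k) = of_nat (CARD('n))^2"
  using delta4a[of "\<lambda>(_::'n) _ _ _. 1"] by (simp add: sum4 power2_eq_square)

lemma sum_bvec: "(\<Sum>k\<in>UNIV. (bvec :: complex^('n::finite idx4)) $ k) = of_nat (CARD('n))^2"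
  using delta4b[of "\<lambda>(_::'n) _ _ _. 1"] by (simp add: sum4 power2_eq_square)

lemma vinner_ab: "vinner ((avec::complex^('n::finite idx4)) + bvec) (avec - bvec) = 0"
proof -
  have ab01: "\<And>k. cnj ((avec + bvec) $ k) * (avec - bvec) $ k = (avec::complex^('n::finite idx4)) $ k - bvec $ k"
  proof -
    fix k :: "'n idx4"
    have 01: "cnj (x + y) * (x - y) = x - y" if "x \<in> {0,1}" "y \<in> {0,1}" for x y :: complex
      using that by auto
    obtain k1 k2 k3 k4 where k: "k = (k1,k2,k3,k4)" by (cases k) auto
    show "cnj ((avec + bvec) $ k) * (avec - bvec) $ k = (avec::complex^('n::finite idx4)) $ k - bvec $ k"
      using 01[of "avec $ k" "bvec $ k"] unfolding k by simp
  qed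
  have "vinner ((avec::complex^('n::finite idx4)) + bvec) (avec - bvec) = (\<Sum>k\<in>UNIV. (avec::complex^('n::finite idx4)) $ k - bvec $ k)"
    unfolding vinner_def ab01 by (rule refl)
  also have "\<dots> = 0" by (simp add: sum_subtractf sum_avec sum_bvec)
  finally show ?thesis .
qed

lemma ab_nonzero:
  assumes "CARD('n::finite) \<ge> 2"
  shows "(avec::complex^('n idx4)) + bvec \<noteq> 0" "(avec::complex^('n idx4)) - bvec \<noteq> 0"
proof -
  obtain u :: 'n where True by blast
  have "\<exists>v::'n. u \<noteq> v"
  proof (rule ccontr)
    assume "\<not> ?thesis"
    then have "(UNIV::'n set) = {u}" by auto
    then have "CARD('n) = card {u}" by (rule arg_cong)
    then show False using assms by simp
  qed
  then obtain v where uv: "u \<noteq> v" by blast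
  have "((avec::complex^('n idx4)) + bvec) $ (u,u,u,u) = 2" by simp
  then show "(avec::complex^('n idx4)) + bvec \<noteq> 0" by (intro notI) simp
  have "((avec::complex^('n idx4)) - bvec) $ (u,v,v,u) = -1" using uv by simp
  then show "(avec::complex^('n idx4)) - bvec \<noteq> 0" by (intro notI) simp
qed

lemma unitary_entry_le: assumes "unitary_mat X" shows "cmod (X$i$j) \<le> 1"
proof -
  have "(\<Sum>k\<in>UNIV. X$i$k * cnj (X$i$k)) = 1" using unitary_rows[OF assms, of i i] by simp
  then have "(\<Sum>k\<in>UNIV. (cmod (X$i$k))^2) = 1"
    by (metis (no_types, lifting) cmod_sq_cnj mult.commute of_real_eq_1_iff of_real_sum sum.cong)
  moreover have "(cmod (X$i$j))^2 \<le> (\<Sum>k\<in>UNIV. (cmod (X$i$k))^2)"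
    by (rule member_le_sum) auto
  ultimately show ?thesis by (simp add: power_le_one_iff abs_le_square_iff)
qed

lemma rho_entry_le: assumes "unitary_mat X" shows "cmod (rho X $ i $ j) \<le> 1"
proof -
  obtain i1 i2 i3 i4 where i: "i = (i1,i2,i3,i4)" by (cases i) auto
  obtain j1 j2 j3 j4 where j: "j = (j1,j2,j3,j4)" by (cases j) auto
  show ?thesis unfolding i j using unitary_entry_le[OF assms]
    by (simp add: norm_mult mult_le_one)
qed



lemma unitary_cadj: "unitary_mat X \<Longrightarrow> unitary_mat (cadj X)"
  by (simp add: unitary_mat_def)

lemma cont_rho_entry: "continuous_on UNIV (\<lambda>X. rho X $ i $ j)"
proof -
  obtain i1 i2 i3 i4 where i: "i = (i1,i2,i3,i4)" by (cases i) auto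
  obtain j1 j2 j3 j4 where j: "j = (j1,j2,j3,j4)" by (cases j) auto
  show ?thesis unfolding i j rho_nth
    by (intro continuous_intros)
qed

lemma cont_mult_left: "continuous_on UNIV (\<lambda>A::complex^'n::finite^'n. V ** A)"
  unfolding matrix_matrix_mult_def by (intro continuous_intros)

definition Pm :: "(complex^'n::finite^'n) measure \<Rightarrow> complex^('n idx4)^('n idx4)" where
  "Pm M = (\<chi> i j. \<integral>X. rho X $ i $ j \<partial>M)"

context
  fixes \<mu> :: "(complex^'n::finite^'n) measure"
  assumes haar: "haar_unitary \<mu>"
begin

lemma ps: "prob_space \<mu>" using haar by (simp add: haar_unitary_def)
lemma fm: "finite_measure \<mu>" using ps by (simp add: prob_space_def)
lemma msp[simp]: "measure \<mu> (space \<mu>) = 1" using prob_space.prob_space[OF ps] by simp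
lemma setsM: "sets \<mu> = sets borel" using haar by (simp add: haar_unitary_def)

lemma AEU: "AE X in \<mu>. unitary_mat X"
proof -
  have e: "emeasure \<mu> {A. unitary_mat A} = 1" using haar by (simp add: haar_unitary_def)
  then have "measure \<mu> {A. unitary_mat A} = 1"
    using finite_measure.emeasure_eq_measure[OF fm] by (metis ennreal_eq_1)
  then have "AE X in \<mu>. X \<in> {A. unitary_mat A}" by (rule prob_space.AE_prob_1[OF ps])
  then show ?thesis by simp
qed

lemma meas_rho: "(\<lambda>X. rho X $ i $ j) \<in> borel_measurable \<mu>"
  using borel_measurable_continuous_onI[OF cont_rho_entry] measurable_cong_sets[OF setsM refl] by blast

lemma intg_rho: "integrable \<mu> (\<lambda>X. rho X $ i $ j)"
proof (rule finite_measure.integrable_const_bound[where B=1])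
  show "finite_measure \<mu>" using ps by (simp add: prob_space_def)
  show "AE X in \<mu>. norm (rho X $ i $ j) \<le> 1" using AEU by eventually_elim (rule rho_entry_le)
  show "(\<lambda>X. rho X $ i $ j) \<in> borel_measurable \<mu>" by (rule meas_rho)
qed

lemma Pm_nth: "Pm \<mu> $ i $ j = (\<integral>X. rho X $ i $ j \<partial>\<mu>)"
  by (simp add: Pm_def)

lemma mult_Pm: "(C ** Pm \<mu>) $ i $ j = (\<integral>X. (C ** rho X) $ i $ j \<partial>\<mu>)"
  by (simp add: matrix_matrix_mult_def Pm_nth intg_rho)

lemma Pm_mult_vec: "(Pm \<mu> *v v) $ i = (\<integral>X. (rho X *v v) $ i \<partial>\<mu>)"
  by (simp add: matrix_vector_mult_def Pm_nth intg_rho)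

lemma int_const: "(\<integral>X. c \<partial>\<mu>) = (c::complex)"
  using prob_space.prob_space[OF ps] by simp

lemma invar: assumes V: "unitary_mat V"
  shows "(\<integral>X. rho (V ** X) $ i $ j \<partial>\<mu>) = (\<integral>X. rho X $ i $ j \<partial>\<mu>)"
proof -
  have d: "distr \<mu> borel (\<lambda>A. V ** A) = \<mu>" using haar V by (simp add: haar_unitary_def)
  have m: "(\<lambda>A. V ** A) \<in> measurable \<mu> borel"
    using borel_measurable_continuous_onI[OF cont_mult_left] measurable_cong_sets[OF setsM refl] by blast
  have "(\<integral>X. rho X $ i $ j \<partial>\<mu>) = (\<integral>X. rho X $ i $ j \<partial>(distr \<mu> borel (\<lambda>A. V ** A)))"
    by (simp add: d)
  also have "\<dots> = (\<integral>X. rho (V ** X) $ i $ j \<partial>\<mu>)"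
    by (rule integral_distr[OF m borel_measurable_continuous_onI[OF cont_rho_entry]])
  finally show ?thesis by simp
qed

lemma left_inv: assumes "unitary_mat V" shows "rho V ** Pm \<mu> = Pm \<mu>"
proof -
  have "(rho V ** Pm \<mu>) $ i $ j = Pm \<mu> $ i $ j" for i j
    by (simp add: mult_Pm rho_mult[symmetric] invar[OF assms] Pm_nth)
  then show ?thesis by (simp add: vec_eq_iff)
qed

lemma right_inv_cadj: assumes "unitary_mat X" shows "cadj (Pm \<mu>) ** rho X = cadj (Pm \<mu>)"
proof -
  have "cadj (Pm \<mu>) ** rho X = cadj (cadj (rho X) ** Pm \<mu>)" by (simp add: cadj_mult)
  also have "cadj (rho X) = rho (cadj X)" by (simp add: rho_cadj)
  also have "rho (cadj X) ** Pm \<mu> = Pm \<mu>" by (rule left_inv[OF unitary_cadj[OF assms]])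
  finally show ?thesis .
qed

lemma meas_const_mult: "(\<lambda>X. (C ** rho X) $ i $ j) \<in> borel_measurable \<mu>"
  unfolding matrix_matrix_mult_def using meas_rho by simp

lemma cPP: "cadj (Pm \<mu>) ** Pm \<mu> = cadj (Pm \<mu>)"
proof -
  have "(cadj (Pm \<mu>) ** Pm \<mu>) $ i $ j = cadj (Pm \<mu>) $ i $ j" for i j
  proof -
    have "(cadj (Pm \<mu>) ** Pm \<mu>) $ i $ j = (\<integral>X. (cadj (Pm \<mu>) ** rho X) $ i $ j \<partial>\<mu>)"
      by (rule mult_Pm)
    also have "\<dots> = (\<integral>X. cadj (Pm \<mu>) $ i $ j \<partial>\<mu>)"
    proof (rule integral_cong_AE[OF meas_const_mult])
      show "(\<lambda>X. cadj (Pm \<mu>) $ i $ j) \<in> borel_measurable \<mu>" by simp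
      show "AE X in \<mu>. (cadj (Pm \<mu>) ** rho X) $ i $ j = cadj (Pm \<mu>) $ i $ j"
        using AEU by eventually_elim (simp add: right_inv_cadj)
    qed
    finally show ?thesis by (simp add: int_const)
  qed
  then show ?thesis by (simp add: vec_eq_iff)
qed

lemma Pm_herm: "cadj (Pm \<mu>) = Pm \<mu>"
proof -
  have "Pm \<mu> = cadj (cadj (Pm \<mu>) ** Pm \<mu>)" by (simp add: cPP)
  also have "\<dots> = cadj (Pm \<mu>) ** Pm \<mu>" by (simp add: cadj_mult)
  also have "\<dots> = cadj (Pm \<mu>)" by (rule cPP)
  finally show ?thesis by simp
qed

lemma Pm_herm_idem: "herm_idem (Pm \<mu>)"
  unfolding herm_idem_def using Pm_herm cPP by simp

lemma Pm_fix: assumes "\<And>X. unitary_mat X \<Longrightarrow> rho X *v v = v" shows "Pm \<mu> *v v = v"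
proof -
  have "(Pm \<mu> *v v) $ i = v $ i" for i
  proof -
    have "(Pm \<mu> *v v) $ i = (\<integral>X. (rho X *v v) $ i \<partial>\<mu>)" by (rule Pm_mult_vec)
    also have "\<dots> = (\<integral>X. v $ i \<partial>\<mu>)"
    proof (rule integral_cong_AE)
      show "(\<lambda>X. (rho X *v v) $ i) \<in> borel_measurable \<mu>"
        unfolding matrix_vector_mult_def using meas_rho by simp
      show "(\<lambda>X. v $ i) \<in> borel_measurable \<mu>" by simp
      show "AE X in \<mu>. (rho X *v v) $ i = v $ i" using AEU by eventually_elim (simp add: assms)
    qed
    finally show ?thesis by (simp add: int_const)
  qed
  then show ?thesis by (simp add: vec_eq_iff)
qed

lemma trace_Pm_ge:
  assumes "CARD('n) \<ge> 2"
  shows "\<exists>r. trace (Pm \<mu>) = complex_of_real r \<and> r \<ge> 2"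
proof -
  define s where "s = (avec::complex^('n idx4)) + bvec"
  define t where "t = (avec::complex^('n idx4)) - bvec"
  have Ps: "Pm \<mu> *v s = s" unfolding s_def
    by (rule Pm_fix) (simp add: matrix_vector_right_distrib rho_fix_a rho_fix_b)
  have Pt: "Pm \<mu> *v t = t" unfolding t_def
    by (rule Pm_fix) (simp add: matrix_vector_mult_diff_distrib rho_fix_a rho_fix_b)
  have s0: "s \<noteq> 0" and t0: "t \<noteq> 0" using ab_nonzero[OF assms] by (auto simp: s_def t_def)
  have st: "vinner s t = 0" using vinner_ab by (simp add: s_def t_def)
  note p1 = proj_sub[OF Pm_herm_idem Ps s0]
  have P1t: "(Pm \<mu> - outer s) *v t = t" by (rule p1(3)[OF Pt st])
  note p2 = proj_sub[OF p1(1) P1t t0]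
  have "trace (Pm \<mu> - outer s - outer t) = trace (Pm \<mu>) - 2"
    using p2(2) p1(2) by simp
  moreover obtain r where r: "trace (Pm \<mu> - outer s - outer t) = complex_of_real r" "r \<ge> 0"
    using trace_herm_idem[OF p2(1)] by (metis (no_types, lifting) sum_nonneg zero_le_power2)
  ultimately have "trace (Pm \<mu>) = complex_of_real (r + 2)" by (simp add: algebra_simps)
  then show ?thesis using r(2) by (intro exI[of _ "r+2"]) simp
qed

end



definition ip :: "complex^'k^'k \<Rightarrow> complex^'k^'k \<Rightarrow> complex" where
  "ip A B = (\<Sum>i\<in>UNIV. \<Sum>j\<in>UNIV. cnj (A$i$j) * B$i$j)"

lemma ip_trace: "ip A B = trace (cadj A ** B)"
  by (simp add: ip_def trace_cadj_mult)

lemma ip_diff: "ip (A - B) (C - D) = ip A C - ip A D - ip B C + ip (B::complex^'k::finite^'k) D"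
  by (simp add: ip_def algebra_simps sum_subtractf sum.distrib)

lemma ip_self: "ip A A = complex_of_real (\<Sum>i\<in>UNIV. \<Sum>j\<in>UNIV. (cmod (A$i$j))^2)"
  by (simp add: ip_def cmod_sq_cnj')

lemma ip_rho: "ip (rho X) (rho Y) = trace (cadj X ** Y)^2 * cnj (trace (cadj X ** Y))^2"
  by (simp add: ip_trace rho_cadj[symmetric] rho_mult[symmetric] trace_rho)

definition Tm :: "complex \<Rightarrow> 'b set \<Rightarrow> ('b \<Rightarrow> complex^'n::finite^'n) \<Rightarrow> complex^('n idx4)^('n idx4)" where
  "Tm c S W = (\<chi> i j. c * (\<Sum>x\<in>S. rho (W x) $ i $ j))"

lemma swap3: "(\<Sum>i\<in>A. \<Sum>j\<in>B. \<Sum>x\<in>S. g x i j) = (\<Sum>x\<in>S. \<Sum>i\<in>A. \<Sum>j\<in>B. (g x i j :: complex))"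
proof -
  have "(\<Sum>i\<in>A. \<Sum>j\<in>B. \<Sum>x\<in>S. g x i j) = (\<Sum>i\<in>A. \<Sum>x\<in>S. \<Sum>j\<in>B. g x i j)"
    by (rule sum.cong[OF refl], rule sum.swap)
  also have "\<dots> = (\<Sum>x\<in>S. \<Sum>i\<in>A. \<Sum>j\<in>B. g x i j)" by (rule sum.swap)
  finally show ?thesis .
qed

lemma ip_T_left: "ip (Tm c S W) B = cnj c * (\<Sum>x\<in>S. ip (rho (W x)) B)"
proof -
  have "ip (Tm c S W) B = (\<Sum>i\<in>UNIV. \<Sum>j\<in>UNIV. \<Sum>x\<in>S. cnj c * (cnj (rho (W x) $ i $ j) * B $ i $ j))"
    by (simp add: ip_def Tm_def cnj_sum sum_distrib_left sum_distrib_right mult.assoc)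
  also have "\<dots> = (\<Sum>x\<in>S. \<Sum>i\<in>UNIV. \<Sum>j\<in>UNIV. cnj c * (cnj (rho (W x) $ i $ j) * B $ i $ j))"
    by (rule swap3)
  also have "\<dots> = cnj c * (\<Sum>x\<in>S. ip (rho (W x)) B)"
    by (simp add: ip_def sum_distrib_left)
  finally show ?thesis .
qed

lemma ip_T_right: "ip B (Tm c S W) = c * (\<Sum>x\<in>S. ip B (rho (W x)))"
proof -
  have "ip B (Tm c S W) = (\<Sum>i\<in>UNIV. \<Sum>j\<in>UNIV. \<Sum>x\<in>S. c * (cnj (B $ i $ j) * rho (W x) $ i $ j))"
    by (simp add: ip_def Tm_def sum_distrib_left sum_distrib_right algebra_simps)
  also have "\<dots> = (\<Sum>x\<in>S. \<Sum>i\<in>UNIV. \<Sum>j\<in>UNIV. c * (cnj (B $ i $ j) * rho (W x) $ i $ j))"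
    by (rule swap3)
  also have "\<dots> = c * (\<Sum>x\<in>S. ip B (rho (W x)))"
    by (simp add: ip_def sum_distrib_left)
  finally show ?thesis .
qed

lemma ip_rho_Pm:
  assumes "haar_unitary \<mu>" "unitary_mat X"
  shows "ip (rho X) (Pm \<mu>) = trace (Pm \<mu>)" "ip (Pm \<mu>) (rho X) = trace (Pm \<mu>)"
    "ip (Pm \<mu>) (Pm \<mu>) = trace (Pm \<mu>)"
proof -
  show "ip (rho X) (Pm \<mu>) = trace (Pm \<mu>)"
    by (simp add: ip_trace rho_cadj[symmetric] left_inv[OF assms(1) unitary_cadj[OF assms(2)]])
  show "ip (Pm \<mu>) (rho X) = trace (Pm \<mu>)"
    by (simp only: ip_trace right_inv_cadj[OF assms]) (simp add: Pm_herm[OF assms(1)])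
  show "ip (Pm \<mu>) (Pm \<mu>) = trace (Pm \<mu>)"
    by (simp only: ip_trace cPP[OF assms(1)]) (simp add: Pm_herm[OF assms(1)])
qed

lemma sum_if_eq: "a \<in> A \<Longrightarrow> finite A \<Longrightarrow> (\<Sum>b\<in>A. if a = b then (x::complex) else y) = x + (of_nat (card A) - 1) * y"
proof -
  assume a: "a \<in> A" and f: "finite A"
  have "(\<Sum>b\<in>A. if a = b then x else y) = (\<Sum>b\<in>A. y + (if a = b then x - y else 0))"
    by (rule sum.cong) auto
  also have "\<dots> = of_nat (card A) * y + (x - y)" using a f by (simp add: sum.distrib sum.delta)
  finally show ?thesis by (simp add: algebra_simps)
qed



lemma sum_cart: "(\<Sum>a\<in>A. \<Sum>j\<in>B. f a j) = (\<Sum>x\<in>A \<times> B. f (fst x) (snd x))"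
  by (simp add: sum.cartesian_product split_def)

lemma tensor_rho: "tensor4_entry X X (cadj X) (cadj X) (i1,i2,i3,i4) (j1,j2,j3,j4) =
   rho X $ (i1,i2,j3,j4) $ (j1,j2,i3,i4)"
  by (simp add: tensor4_entry_def)

lemma unbiased_val: assumes "(cmod t)^2 = 1" shows "t^2 * cnj t^2 = (1::complex)"
proof -
  have "t * cnj t = complex_of_real ((cmod t)^2)" by (simp add: cmod_sq_cnj' mult.commute)
  then have "t * cnj t = 1" using assms by simp
  then have "(t * cnj t)^2 = 1" by simp
  then show ?thesis by (simp add: power_mult_distrib)
qed

theorem mainTheorem9:
  fixes U :: "nat \<Rightarrow> nat \<Rightarrow> complex^'n^'n"
    and \<mu> :: "(complex^'n^'n) measure"
  assumes d2: "CARD('n) \<ge> 2"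
    and bases: "\<And>a. a < CARD('n)^2 - 1 \<Longrightarrow> unitary_operator_basis (U a)"
    and mub: "\<And>a b. a < CARD('n)^2 - 1 \<Longrightarrow> b < CARD('n)^2 - 1 \<Longrightarrow> a \<noteq> b
                 \<Longrightarrow> mutually_unbiased (U a) (U b)"
    and haar: "haar_unitary \<mu>"
  shows "\<forall>I J. (1 / (of_nat (CARD('n)^2 * (CARD('n)^2 - 1))) *
      (\<Sum>a < CARD('n)^2 - 1. \<Sum>j < CARD('n)^2.
         tensor4_entry (U a j) (U a j) (cadj (U a j)) (cadj (U a j)) I J))
    = (\<integral>X. tensor4_entry X X (cadj X) (cadj X) I J \<partial>\<mu>)"
proof -
  define d where "d = CARD('n)"
  define N1 where "N1 = d^2 - 1"
  define S where "S = {..<N1} \<times> {..<d^2}"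
  define W where "W = (\<lambda>x. U (fst x) (snd x))"
  define c :: complex where "c = 1 / of_nat (d^2 * N1)"
  define T where "T = Tm c S W"
  define P where "P = Pm \<mu>"
  have dge: "d \<ge> 2" using d2 by (simp add: d_def)
  have d2ge: "d^2 \<ge> 4" using power_mono[OF dge, of 2] by simp
  have N1pos: "N1 \<ge> 3" using d2ge by (simp add: N1_def)
  have cardS: "card S = N1 * d^2" by (simp add: S_def)
  have unitW: "unitary_mat (W x)" if "x \<in> S" for x
    using bases[of "fst x"] that
    by (auto simp: S_def W_def N1_def d_def unitary_operator_basis_def)
  have val: "ip (rho (W x)) (rho (W y)) =
      (if fst x = fst y then (if snd x = snd y then of_nat d ^ 4 else 0) else 1)"
    if xS: "x \<in> S" and yS: "y \<in> S" for x y
  proof (cases "fst x = fst y")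
    case True
    have "trace (cadj (W x) ** W y) = (if snd x = snd y then of_nat d else 0)"
      using bases[of "fst x"] xS yS True
      by (auto simp: S_def W_def N1_def d_def unitary_operator_basis_def)
    then show ?thesis using True by (simp add: ip_rho)
  next
    case False
    have "(cmod (trace (cadj (W x) ** W y)))^2 = 1"
      using mub[of "fst x" "fst y"] xS yS False
      by (auto simp: S_def W_def N1_def d_def mutually_unbiased_def)
    then show ?thesis using False by (simp add: ip_rho unbiased_val)
  qed
  have rowsum: "(\<Sum>y\<in>S. ip (rho (W x)) (rho (W y))) =
      of_nat d ^ 4 + (of_nat N1 - 1) * of_nat d ^ 2" if xS: "x \<in> S" for x
  proof -
    have "(\<Sum>y\<in>S. ip (rho (W x)) (rho (W y))) =
        (\<Sum>y\<in>S. (if fst x = fst y then (if snd x = snd y then of_nat d ^ 4 else 0) else 1))"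
      using val[OF xS] by (rule sum.cong[OF refl])
    also have "\<dots> = (\<Sum>b\<in>{..<N1}. \<Sum>k\<in>{..<d^2}.
        (if fst x = b then (if snd x = k then of_nat d ^ 4 else 0) else (1::complex)))"
      unfolding S_def by (simp add: sum_cart)
    also have "\<dots> = (\<Sum>b\<in>{..<N1}. if fst x = b then of_nat d ^ 4 else of_nat d ^ 2)"
    proof (rule sum.cong[OF refl])
      fix b assume "b \<in> {..<N1}"
      have "snd x < d^2" using xS by (auto simp: S_def)
      then show "(\<Sum>k\<in>{..<d^2}. (if fst x = b then (if snd x = k then of_nat d ^ 4 else 0) else (1::complex)))
          = (if fst x = b then of_nat d ^ 4 else of_nat d ^ 2)"
        by (simp add: sum.delta)
    qed
    also have "\<dots> = of_nat d ^ 4 + (of_nat N1 - 1) * of_nat d ^ 2"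
      using xS by (subst sum_if_eq) (auto simp: S_def)
    finally show ?thesis .
  qed
  have cnjc: "cnj c = c" by (simp add: c_def)
  define D :: complex where "D = of_nat d"
  have N1D: "of_nat N1 = D^2 - 1" using d2ge by (simp add: N1_def D_def of_nat_diff)
  have D0: "D \<noteq> 0" using dge by (simp add: D_def)
  have D1: "D^2 - 1 \<noteq> 0"
  proof
    assume "D^2 - 1 = 0"
    then have "of_nat (d^2) = (1::complex)" by (simp add: D_def)
    then have "d^2 = 1" by (metis of_nat_eq_1_iff)
    then show False using d2ge by simp
  qed
  have D4: "D^4 \<noteq> D^2"
  proof
    assume "D^4 = D^2"
    moreover have "D^2 * (D^2 - 1) = D^4 - D^2"
      by (simp add: right_diff_distrib power2_eq_square power4_eq_xxxx)
    ultimately have "D^2 * (D^2 - 1) = 0" by simp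
    then show False using D0 D1 by simp
  qed
  have cS: "c * of_nat (card S) = 1"
    using D0 D1 D4 by (simp add: c_def cardS N1D D_def[symmetric] field_simps)
  have ipTT: "ip T T = 2"
  proof -
    have "ip T T = cnj c * (\<Sum>x\<in>S. c * (\<Sum>y\<in>S. ip (rho (W x)) (rho (W y))))"
      unfolding T_def by (subst ip_T_left[of c S W "Tm c S W"]) (simp add: ip_T_right)
    also have "\<dots> = c * c * (of_nat (card S) * (of_nat d ^ 4 + (of_nat N1 - 1) * of_nat d ^ 2))"
      by (simp add: rowsum cnjc sum_distrib_left[symmetric] mult.assoc)
    also have "\<dots> = 2"
    proof -
      define E where "E = D^2 * (D^2 - 1)"
      have E0: "E \<noteq> 0" using D0 D1 by (simp add: E_def)
      have cE: "c = 1 / E" by (simp add: c_def N1D E_def D_def)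
      have cardE: "of_nat (card S) = E" by (simp add: cardS N1D E_def D_def mult.commute)
      have rowE: "of_nat d ^ 4 + (of_nat N1 - 1) * of_nat d ^ 2 = 2 * E"
        by (simp add: N1D E_def D_def[symmetric]) (simp add: algebra_simps power2_eq_square power4_eq_xxxx)
      show ?thesis unfolding cE cardE rowE using E0 by (simp add: field_simps)
    qed
    finally show ?thesis .
  qed
  have ipTP: "ip T P = trace P"
  proof -
    have "ip T P = cnj c * (\<Sum>x\<in>S. trace P)"
      unfolding T_def ip_T_left P_def using ip_rho_Pm(1)[OF haar unitW] by simp
    then show ?thesis using cS cnjc by (simp add: mult.assoc[symmetric])
  qed
  have ipPT: "ip P T = trace P"
  proof -
    have "ip P T = c * (\<Sum>x\<in>S. trace P)"
      unfolding T_def ip_T_right P_def using ip_rho_Pm(2)[OF haar unitW] by simp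
    then show ?thesis using cS by (simp add: mult.assoc[symmetric])
  qed
  have PP: "ip P P = trace P"
    unfolding P_def
    using ip_rho_Pm(3)[OF haar unitW[of "(0, 0)"]] N1pos dge by (simp add: S_def)
  obtain r where r: "trace P = complex_of_real r" "r \<ge> 2"
    using trace_Pm_ge[OF haar d2] by (auto simp: P_def)
  have "complex_of_real (\<Sum>i\<in>UNIV. \<Sum>j\<in>UNIV. (cmod ((T - P)$i$j))^2) = ip (T - P) (T - P)"
    by (simp add: ip_self)
  also have "\<dots> = complex_of_real (2 - r)"
    by (simp add: ip_diff ipTT ipTP ipPT PP r)
  finally have sumeq: "(\<Sum>i\<in>UNIV. \<Sum>j\<in>UNIV. (cmod ((T - P)$i$j))^2) = 2 - r"
    using of_real_eq_iff by blast
  have nn: "0 \<le> (\<Sum>i\<in>UNIV. \<Sum>j\<in>UNIV. (cmod ((T - P)$i$j))^2)" by (intro sum_nonneg) simp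
  have "(\<Sum>i\<in>UNIV. \<Sum>j\<in>UNIV. (cmod ((T - P)$i$j))^2) = 0"
    using sumeq r(2) nn by linarith
  then have allz: "\<forall>i j. (cmod ((T - P)$i$j))^2 = 0"
    by (simp add: sum_nonneg_eq_0_iff sum_nonneg)
  then have TP: "T $ i $ j = P $ i $ j" for i j using allz[rule_format, of i j] by simp
  show ?thesis
  proof (intro allI)
    fix I J :: "'n idx4"
    obtain i1 i2 i3 i4 where I: "I = (i1,i2,i3,i4)" by (cases I) auto
    obtain j1 j2 j3 j4 where J: "J = (j1,j2,j3,j4)" by (cases J) auto
    have "(1 / (of_nat (CARD('n)^2 * (CARD('n)^2 - 1))) *
      (\<Sum>a < CARD('n)^2 - 1. \<Sum>j < CARD('n)^2.
         tensor4_entry (U a j) (U a j) (cadj (U a j)) (cadj (U a j)) I J))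
      = T $ (i1,i2,j3,j4) $ (j1,j2,i3,i4)"
      unfolding I J tensor_rho T_def Tm_def c_def S_def W_def N1_def d_def
      by (simp add: sum_cart)
    also have "\<dots> = P $ (i1,i2,j3,j4) $ (j1,j2,i3,i4)" by (rule TP)
    also have "\<dots> = (\<integral>X. tensor4_entry X X (cadj X) (cadj X) I J \<partial>\<mu>)"
      unfolding I J tensor_rho P_def by (simp add: Pm_def)
    finally show "(1 / (of_nat (CARD('n)^2 * (CARD('n)^2 - 1))) *
      (\<Sum>a < CARD('n)^2 - 1. \<Sum>j < CARD('n)^2.
         tensor4_entry (U a j) (U a j) (cadj (U a j)) (cadj (U a j)) I J))
      = (\<integral>X. tensor4_entry X X (cadj X) (cadj X) I J \<partial>\<mu>)" .
  qed
qed


end
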